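(* Let $R=\Bbbk[x_1,\dots,x_n]$ be a polynomial ring over a field $\Bbbk$, and let $I$ and $J$ be monomial ideals of $R$ such that every element of $G(I)$ has degree $d_1$ and every element of $G(J)$ has degree $d_2$. Let $k>1$ be an integer and let $m=\max\{i \mid x_i \text{ divides a minimal monomial generator of } I\}$. Suppose that $(x_1^{k-1},\dots,x_m^{k-1})\subseteq J$. Then the ordered pair $(I^{[k]},J)$ is conjoined.
   Context: All ideals are monomial ideals in $R$. For a monomial ideal $I$, $G(I)$ denotes its unique minimal set of monomial generators. $I^{[k]}$ is the ideal generated by $\{u^k : u\in G(I)\}$. An ordered pair $(I,J)$ of monomial ideals of $R$ is called conjoined if (i) $|G(IJ)|=|G(I)|\cdot|G(J)|$, and (ii) there is a minimal presentation $R^s\xrightarrow{\phi}R^t\xrightarrow{\psi}I\to 0$ of $I$ such that all entries of the matrix of $\phi$ belong to $J$. *)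

theory Defs
  imports "HOL-Library.Poly_Mapping"
begin

text \<open>Polynomials in R = k[x_1,...,x_n]: elements of (nat =>0 nat) =>0 'k whose
  monomials (exponent vectors) only involve the variables 1..n.\<close>

type_synonym 'k mpoly = "(nat \<Rightarrow>\<^sub>0 nat) \<Rightarrow>\<^sub>0 'k"

definition polyR :: "nat \<Rightarrow> 'k::field mpoly set" where
  "polyR n = {p. \<forall>a\<in>Poly_Mapping.keys (p::'k mpoly). Poly_Mapping.keys (a::nat \<Rightarrow>\<^sub>0 nat) \<subseteq> {1..n}}"

definition monom :: "(nat \<Rightarrow>\<^sub>0 nat) \<Rightarrow> 'k::field mpoly" where
  "monom a = Poly_Mapping.single a 1"

definition var :: "nat \<Rightarrow> 'k::field mpoly" where
  "var i = monom (Poly_Mapping.single i 1)"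

definition mdvd :: "(nat \<Rightarrow>\<^sub>0 nat) \<Rightarrow> (nat \<Rightarrow>\<^sub>0 nat) \<Rightarrow> bool" where
  "mdvd b a \<longleftrightarrow> (\<forall>i. Poly_Mapping.lookup b i \<le> Poly_Mapping.lookup a i)"

definition mdeg :: "(nat \<Rightarrow>\<^sub>0 nat) \<Rightarrow> nat" where
  "mdeg a = (\<Sum>i\<in>Poly_Mapping.keys a. Poly_Mapping.lookup a i)"

definition ideal_gen :: "nat \<Rightarrow> 'k::field mpoly set \<Rightarrow> 'k mpoly set" where
  "ideal_gen n S = {p. \<exists>gs cs. set gs \<subseteq> S \<and> length cs = length gs \<and> set cs \<subseteq> polyR n
      \<and> p = (\<Sum>i<length gs. cs ! i * gs ! i)}"

definition monomial_ideal :: "nat \<Rightarrow> 'k::field mpoly set \<Rightarrow> bool" where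
  "monomial_ideal n I \<longleftrightarrow> (\<exists>M. (\<forall>a\<in>M. Poly_Mapping.keys a \<subseteq> {1..n}) \<and> I = ideal_gen n (monom ` M))"

definition mingens :: "nat \<Rightarrow> 'k::field mpoly set \<Rightarrow> (nat \<Rightarrow>\<^sub>0 nat) set" where
  "mingens n I = {a. Poly_Mapping.keys a \<subseteq> {1..n} \<and> (monom a :: 'k mpoly) \<in> I \<and>
      (\<forall>b. (monom b :: 'k mpoly) \<in> I \<and> mdvd b a \<longrightarrow> b = a)}"

definition G :: "nat \<Rightarrow> 'k::field mpoly set \<Rightarrow> 'k mpoly set" where
  "G n I = monom ` mingens n I"

definition frob_pow :: "nat \<Rightarrow> nat \<Rightarrow> 'k::field mpoly set \<Rightarrow> 'k mpoly set" where
  "frob_pow n k I = ideal_gen n ((\<lambda>u. u ^ k) ` G n I)"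

definition ideal_prod :: "nat \<Rightarrow> 'k::field mpoly set \<Rightarrow> 'k mpoly set \<Rightarrow> 'k mpoly set" where
  "ideal_prod n I J = ideal_gen n {f * g | f g. f \<in> I \<and> g \<in> J}"

text \<open>Free modules R^t: vectors nat => poly, entries in R, zero from index t on.
  The map psi: R^t -> I sends e_i to gs!i; the map phi: R^s -> R^t is given by
  the t x s matrix A (A i j = entry in row i, column j).\<close>

definition kernel_psi :: "nat \<Rightarrow> 'k::field mpoly list \<Rightarrow> (nat \<Rightarrow> 'k mpoly) set" where
  "kernel_psi n gs = {v. (\<forall>i. v i \<in> polyR n) \<and> (\<forall>i\<ge>length gs. v i = 0)
      \<and> (\<Sum>i<length gs. v i * gs ! i) = 0}"

definition image_phi :: "nat \<Rightarrow> nat \<Rightarrow> nat \<Rightarrow> (nat \<Rightarrow> nat \<Rightarrow> 'k::field mpoly) \<Rightarrow> (nat \<Rightarrow> 'k mpoly) set" where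
  "image_phi n t s A = {v. \<exists>r. (\<forall>j<s. r j \<in> polyR n) \<and>
      v = (\<lambda>i. if i < t then (\<Sum>j<s. A i j * r j) else 0)}"

definition matrix_over :: "nat \<Rightarrow> nat \<Rightarrow> nat \<Rightarrow> (nat \<Rightarrow> nat \<Rightarrow> 'k::field mpoly) \<Rightarrow> bool" where
  "matrix_over n t s A \<longleftrightarrow> (\<forall>i<t. \<forall>j<s. A i j \<in> polyR n)"

definition minimal_presentation ::
  "nat \<Rightarrow> 'k::field mpoly set \<Rightarrow> 'k mpoly list \<Rightarrow> nat \<Rightarrow> (nat \<Rightarrow> nat \<Rightarrow> 'k mpoly) \<Rightarrow> bool" where
  "minimal_presentation n I gs s A \<longleftrightarrow>
     distinct gs \<and> set gs = G n I \<and>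
     matrix_over n (length gs) s A \<and> image_phi n (length gs) s A = kernel_psi n gs \<and>
     (\<forall>s' A'. matrix_over n (length gs) s' A' \<and> image_phi n (length gs) s' A' = kernel_psi n gs
         \<longrightarrow> s \<le> s')"

definition conjoined :: "nat \<Rightarrow> 'k::field mpoly set \<Rightarrow> 'k mpoly set \<Rightarrow> bool" where
  "conjoined n I J \<longleftrightarrow>
     card (G n (ideal_prod n I J)) = card (G n I) * card (G n J) \<and>
     (\<exists>gs s A. minimal_presentation n I gs s A \<and>
        (\<forall>i<length gs. \<forall>j<s. A i j \<in> J))"

end

theory Submission
  imports Defs "HOL-Library.FuncSet"
begin


lemma mdvd_iff_add: "mdvd e x \<longleftrightarrow> (\<exists>l. x = l + e)"
proof
  assume "mdvd e x"
  hence "x = (x - e) + e"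
    by (intro poly_mapping_eqI) (simp add: lookup_add lookup_minus mdvd_def)
  thus "\<exists>l. x = l + e" by blast
next
  assume "\<exists>l. x = l + e" thus "mdvd e x" by (auto simp: mdvd_def lookup_add)
qed

lemma minus_add_cancel_pm: "mdvd e x \<Longrightarrow> (x - e) + e = (x::nat\<Rightarrow>\<^sub>0nat)"
  by (intro poly_mapping_eqI) (simp add: lookup_add lookup_minus mdvd_def)

lemma lookup_mult_monom:
  "Poly_Mapping.lookup (p * monom e) x = (if mdvd e x then Poly_Mapping.lookup p (x - e) else (0::'k::field))"
proof -
  have "Poly_Mapping.lookup (p * monom e) x = (\<Sum>l. Poly_Mapping.lookup p l * (1 when x = l + e))"
    unfolding lookup_mult monom_def lookup_single
  proof (intro Sum_any.cong arg_cong[where f="\<lambda>z. _ * z"])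
    fix l
    show "(\<Sum>q. ((1::'k) when e = q) when x = l + q) = (1 when x = l + e)"
    proof -
      have "(\<Sum>q. ((1::'k) when e = q) when x = l + q) = (\<Sum>q. ((1::'k) when x = l + e) when e = q)"
        by (intro Sum_any.cong) (auto simp: when_def)
      also have "\<dots> = (1 when x = l + e)" by simp
      finally show ?thesis .
    qed
  qed
  also have "\<dots> = (\<Sum>l. Poly_Mapping.lookup p l when x = l + e)"
    by (simp add: mult_when)
  also have "\<dots> = (if mdvd e x then Poly_Mapping.lookup p (x - e) else 0)"
  proof (cases "mdvd e x")
    case True
    have "\<And>l. (x = l + e) = (l = x - e)"
      using True minus_add_cancel_pm by force
    then show ?thesis using True by simp
  next
    case False
    then show ?thesis using mdvd_iff_add by (simp add: when_def)
  qed
  finally show ?thesis .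
qed

lemma keys_add_nat: "Poly_Mapping.keys (a + b :: nat \<Rightarrow>\<^sub>0 nat) = Poly_Mapping.keys a \<union> Poly_Mapping.keys b"
  by (rule set_eqI) (simp add: in_keys_iff lookup_add)

lemma polyR_0[simp]: "0 \<in> polyR n" by (simp add: polyR_def)

lemma polyR_add: "p \<in> polyR n \<Longrightarrow> q \<in> polyR n \<Longrightarrow> p + q \<in> polyR n"
proof -
  assume p: "p \<in> polyR n" and q: "q \<in> polyR n"
  show ?thesis unfolding polyR_def mem_Collect_eq
  proof
    fix a assume "a \<in> Poly_Mapping.keys (p + q)"
    then have "a \<in> Poly_Mapping.keys p \<or> a \<in> Poly_Mapping.keys q" using keys_add[of p q] by blast
    then show "Poly_Mapping.keys a \<subseteq> {1..n}" using p q unfolding polyR_def by blast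
  qed
qed

lemma polyR_uminus: "p \<in> polyR n \<Longrightarrow> - p \<in> polyR n"
  unfolding polyR_def by simp

lemma polyR_diff: "p \<in> polyR n \<Longrightarrow> q \<in> polyR n \<Longrightarrow> p - q \<in> polyR n"
  using polyR_add[of p n "- q"] polyR_uminus[of q n] by (simp only: diff_conv_add_uminus)

lemma polyR_mult: "p \<in> polyR n \<Longrightarrow> q \<in> polyR n \<Longrightarrow> p * q \<in> polyR n"
proof -
  assume p: "p \<in> polyR n" and q: "q \<in> polyR n"
  show ?thesis unfolding polyR_def mem_Collect_eq
  proof
    fix a assume "a \<in> Poly_Mapping.keys (p * q)"
    then obtain b c where "a = b + c" "b \<in> Poly_Mapping.keys p" "c \<in> Poly_Mapping.keys q"
      using keys_mult[of p q] by blast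
    moreover have "Poly_Mapping.keys a = Poly_Mapping.keys b \<union> Poly_Mapping.keys c"
      using calculation(1) by (simp add: keys_add_nat)
    ultimately show "Poly_Mapping.keys a \<subseteq> {1..n}" using p q unfolding polyR_def by blast
  qed
qed

lemma polyR_single: "Poly_Mapping.keys a \<subseteq> {1..n} \<Longrightarrow> Poly_Mapping.single a c \<in> polyR n"
  unfolding polyR_def by simp

lemma polyR_monom: "Poly_Mapping.keys a \<subseteq> {1..n} \<Longrightarrow> monom a \<in> polyR n"
  unfolding monom_def by (rule polyR_single)

lemma polyR_sum: "(\<And>i. i \<in> A \<Longrightarrow> f i \<in> polyR n) \<Longrightarrow> sum f A \<in> polyR n"
  by (induction A rule: infinite_finite_induct) (auto intro: polyR_add)

definition is_id :: "nat \<Rightarrow> 'k::field mpoly set \<Rightarrow> bool" where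
  "is_id n Y \<longleftrightarrow> 0 \<in> Y \<and> (\<forall>x\<in>Y. \<forall>y\<in>Y. x + y \<in> Y) \<and> (\<forall>q\<in>polyR n. \<forall>x\<in>Y. q * x \<in> Y)"

lemma is_id_sum: "is_id n Y \<Longrightarrow> (\<And>i. i \<in> A \<Longrightarrow> f i \<in> Y) \<Longrightarrow> sum f A \<in> Y"
  unfolding is_id_def by (induction A rule: infinite_finite_induct) auto

lemma ideal_gen_least:
  assumes "is_id n Y" "S \<subseteq> Y"
  shows "ideal_gen n S \<subseteq> Y"
proof
  fix p assume "p \<in> ideal_gen n S"
  then obtain gs cs where g: "set gs \<subseteq> S" "length cs = length gs" "set cs \<subseteq> polyR n"
    "p = (\<Sum>i<length gs. cs ! i * gs ! i)" unfolding ideal_gen_def by blast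
  show "p \<in> Y" unfolding g(4)
  proof (rule is_id_sum[OF assms(1)])
    fix i assume "i \<in> {..<length gs}"
    then have "cs ! i \<in> polyR n" "gs ! i \<in> Y" using g assms(2) by (auto simp: subset_iff)
    then show "cs ! i * gs ! i \<in> Y" using assms(1) unfolding is_id_def by blast
  qed
qed

lemma sum_lessThan_add_split:
  fixes a b :: nat shows "(\<Sum>i<a + b. f i) = (\<Sum>i<a. f i) + (\<Sum>i<b. f (a + i))"
  by (induction b) (auto simp: add_ac)

lemma is_id_ideal_gen: "is_id n (ideal_gen n (S::'k::field mpoly set))"
  unfolding is_id_def
proof (intro conjI ballI)
  show "0 \<in> ideal_gen n S" unfolding ideal_gen_def
    by (rule CollectI, rule exI[of _ "[]"], rule exI[of _ "[]"]) simp
next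
  fix x y :: "'k mpoly" assume "x \<in> ideal_gen n S" "y \<in> ideal_gen n S"
  then obtain gs cs hs ds where g: "set gs \<subseteq> S" "length cs = length gs" "set cs \<subseteq> polyR n"
    "x = (\<Sum>i<length gs. cs ! i * gs ! i)"
    and h: "set hs \<subseteq> S" "length ds = length hs" "set ds \<subseteq> polyR n"
    "y = (\<Sum>i<length hs. ds ! i * hs ! i)" unfolding ideal_gen_def by blast
  have "x + y = (\<Sum>i<length (gs @ hs). (cs @ ds) ! i * (gs @ hs) ! i)"
    unfolding length_append sum_lessThan_add_split g(4) h(4)
    by (intro arg_cong2[where f="(+)"] sum.cong) (auto simp: nth_append g(2))
  moreover have "set (gs @ hs) \<subseteq> S" "length (cs @ ds) = length (gs @ hs)" "set (cs @ ds) \<subseteq> polyR n"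
    using g h by auto
  ultimately show "x + y \<in> ideal_gen n S" unfolding ideal_gen_def by blast
next
  fix q x :: "'k mpoly" assume q: "q \<in> polyR n" and "x \<in> ideal_gen n S"
  then obtain gs cs where g: "set gs \<subseteq> S" "length cs = length gs" "set cs \<subseteq> polyR n"
    "x = (\<Sum>i<length gs. cs ! i * gs ! i)" unfolding ideal_gen_def by blast
  have "q * x = (\<Sum>i<length gs. (map ((*) q) cs) ! i * gs ! i)"
    unfolding g(4) sum_distrib_left by (intro sum.cong) (auto simp: g(2) mult.assoc)
  moreover have "set (map ((*) q) cs) \<subseteq> polyR n" using g(3) q polyR_mult by auto
  moreover have "length (map ((*) q) cs) = length gs" using g(2) by simp
  ultimately show "q * x \<in> ideal_gen n S" unfolding ideal_gen_def using g(1) by blast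
qed

lemma ideal_gen_gen: "q \<in> polyR n \<Longrightarrow> g \<in> S \<Longrightarrow> q * g \<in> ideal_gen n S"
  unfolding ideal_gen_def
  by (rule CollectI, rule exI[of _ "[g]"], rule exI[of _ "[q]"]) simp

lemma ideal_gen_mono: "S \<subseteq> T \<Longrightarrow> ideal_gen n S \<subseteq> ideal_gen n T"
  unfolding ideal_gen_def by blast

definition mideal :: "nat \<Rightarrow> (nat \<Rightarrow>\<^sub>0 nat) set \<Rightarrow> 'k::field mpoly set" where
  "mideal n M = {p. p \<in> polyR n \<and> (\<forall>c\<in>Poly_Mapping.keys p. \<exists>b\<in>M. mdvd b c)}"

lemma mdvd_refl[simp]: "mdvd a a" by (simp add: mdvd_def)
lemma mdvd_trans: "mdvd a b \<Longrightarrow> mdvd b c \<Longrightarrow> mdvd a c"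
  unfolding mdvd_def using le_trans by blast
lemma mdvd_antisym: "mdvd a b \<Longrightarrow> mdvd b a \<Longrightarrow> a = b"
  unfolding mdvd_def by (intro poly_mapping_eqI) (simp add: le_antisym)
lemma mdvd_add_right: "mdvd a b \<Longrightarrow> mdvd a (b + c)"
  unfolding mdvd_def by (simp add: lookup_add add_increasing2 trans_le_add1)
lemma mdvd_add_left: "mdvd a b \<Longrightarrow> mdvd a (c + b)"
  unfolding mdvd_def by (simp add: lookup_add trans_le_add2)
lemma mdvd_add_mono: "mdvd a b \<Longrightarrow> mdvd c d \<Longrightarrow> mdvd (a + c) (b + d)"
  unfolding mdvd_def by (simp add: lookup_add add_mono)

lemma is_id_mideal: "is_id n (mideal n M :: 'k::field mpoly set)"
proof -
  have "x + y \<in> mideal n M" if x: "x \<in> mideal n M" and y: "y \<in> mideal n M" for x y :: "'k mpoly"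
  proof -
    have "x + y \<in> polyR n" using x y polyR_add unfolding mideal_def by blast
    moreover have "\<forall>c\<in>Poly_Mapping.keys (x + y). \<exists>b\<in>M. mdvd b c"
    proof
      fix c assume "c \<in> Poly_Mapping.keys (x + y)"
      then have "c \<in> Poly_Mapping.keys x \<or> c \<in> Poly_Mapping.keys y" using keys_add[of x y] by blast
      then show "\<exists>b\<in>M. mdvd b c" using x y unfolding mideal_def by blast
    qed
    ultimately show ?thesis unfolding mideal_def by blast
  qed
  moreover have "q * x \<in> mideal n M" if q: "q \<in> polyR n" and x: "x \<in> mideal n M" for q x :: "'k mpoly"
  proof -
    have "q * x \<in> polyR n" using x q polyR_mult unfolding mideal_def by blast
    moreover have "\<forall>c\<in>Poly_Mapping.keys (q * x). \<exists>b\<in>M. mdvd b c"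
    proof
      fix c assume "c \<in> Poly_Mapping.keys (q * x)"
      then obtain a d where "c = a + d" "d \<in> Poly_Mapping.keys x" using keys_mult[of q x] by blast
      then show "\<exists>b\<in>M. mdvd b c" using x mdvd_add_left unfolding mideal_def by blast
    qed
    ultimately show ?thesis unfolding mideal_def by blast
  qed
  moreover have "(0::'k mpoly) \<in> mideal n M" unfolding mideal_def by simp
  ultimately show ?thesis unfolding is_id_def by blast
qed

lemma poly_sum_singles: "(\<Sum>c\<in>Poly_Mapping.keys p. Poly_Mapping.single c (Poly_Mapping.lookup p c)) = p"
proof (rule poly_mapping_eqI)
  fix k
  show "Poly_Mapping.lookup (\<Sum>c\<in>Poly_Mapping.keys p. Poly_Mapping.single c (Poly_Mapping.lookup p c)) k = Poly_Mapping.lookup p k"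
    unfolding lookup_sum lookup_single
    by (cases "k \<in> Poly_Mapping.keys p") (simp_all add: when_def in_keys_iff)
qed

lemma single_mult_monom: "Poly_Mapping.single a c * monom b = Poly_Mapping.single (a + b) (c::'k::field)"
  unfolding monom_def mult_single by simp

lemma ideal_gen_char:
  assumes M: "\<forall>a\<in>M. Poly_Mapping.keys a \<subseteq> {1..n}"
  shows "ideal_gen n (monom ` M) = (mideal n M :: 'k::field mpoly set)"
proof
  show "ideal_gen n (monom ` M) \<subseteq> (mideal n M :: 'k mpoly set)"
  proof (rule ideal_gen_least[OF is_id_mideal])
    show "monom ` M \<subseteq> (mideal n M :: 'k mpoly set)"
      using M by (auto simp: mideal_def polyR_monom) (auto simp: monom_def intro: bexI[where P="\<lambda>b. mdvd b _", OF mdvd_refl])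
  qed
next
  show "(mideal n M :: 'k mpoly set) \<subseteq> ideal_gen n (monom ` M)"
  proof
    fix p :: "'k mpoly" assume p: "p \<in> mideal n M"
    have "(\<Sum>c\<in>Poly_Mapping.keys p. Poly_Mapping.single c (Poly_Mapping.lookup p c)) \<in> ideal_gen n (monom ` M)"
    proof (rule is_id_sum[OF is_id_ideal_gen])
      fix c assume c: "c \<in> Poly_Mapping.keys p"
      then obtain b where b: "b \<in> M" "mdvd b c" using p unfolding mideal_def by blast
      have kc: "Poly_Mapping.keys c \<subseteq> {1..n}" using p c unfolding mideal_def polyR_def by blast
      have "Poly_Mapping.single c (Poly_Mapping.lookup p c) = Poly_Mapping.single (c - b) (Poly_Mapping.lookup p c) * monom b"
        using single_mult_monom minus_add_cancel_pm[OF b(2)] by metis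
      moreover have "Poly_Mapping.keys (c - b) \<subseteq> {1..n}"
        using kc by (auto simp: in_keys_iff lookup_minus)
      ultimately show "Poly_Mapping.single c (Poly_Mapping.lookup p c) \<in> ideal_gen n (monom ` M)"
        using ideal_gen_gen polyR_single b(1) by (metis image_eqI)
    qed
    then show "p \<in> ideal_gen n (monom ` M)" by (simp add: poly_sum_singles)
  qed
qed



definition scal :: "nat \<Rightarrow> (nat \<Rightarrow>\<^sub>0 nat) \<Rightarrow> (nat \<Rightarrow>\<^sub>0 nat)" where
  "scal j a = Poly_Mapping.map ((*) j) a"

lemma lookup_scal[simp]: "Poly_Mapping.lookup (scal j a) i = j * Poly_Mapping.lookup a i"
  unfolding scal_def map.rep_eq by (simp add: when_def)

lemma scal_Suc: "scal (Suc j) a = a + scal j a"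
  by (rule poly_mapping_eqI) (simp add: lookup_add)

lemma scal_0: "scal 0 a = 0"
  by (rule poly_mapping_eqI) simp

lemma monom_add: "monom a * monom b = (monom (a + b) :: 'k::field mpoly)"
  unfolding monom_def mult_single by simp

lemma monom_pow: "(monom a :: 'k::field mpoly) ^ j = monom (scal j a)"
proof (induction j)
  case 0
  then show ?case by (simp add: scal_0 monom_def)
next
  case (Suc j)
  then show ?case by (simp add: scal_Suc monom_add)
qed

lemma scal_single: "scal j (Poly_Mapping.single l 1) = Poly_Mapping.single l j"
  by (rule poly_mapping_eqI) (simp add: lookup_single when_def)

lemma keys_scal: "j > 0 \<Longrightarrow> Poly_Mapping.keys (scal j a) = Poly_Mapping.keys a"
  by (rule set_eqI) (simp add: in_keys_iff)

lemma mdvd_scal_iff: "j > 0 \<Longrightarrow> mdvd (scal j a) (scal j b) \<longleftrightarrow> mdvd a b"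
  unfolding mdvd_def by simp

lemma scal_inj: "j > 0 \<Longrightarrow> scal j a = scal j b \<Longrightarrow> a = b"
  by (metis mdvd_antisym mdvd_refl mdvd_scal_iff)

lemma mdeg_superset: "finite F \<Longrightarrow> Poly_Mapping.keys a \<subseteq> F \<Longrightarrow> mdeg a = (\<Sum>i\<in>F. Poly_Mapping.lookup a i)"
  unfolding mdeg_def by (rule sum.mono_neutral_left) (auto simp: in_keys_iff)

lemma mdeg_add: "mdeg (a + b) = mdeg a + mdeg b"
proof -
  let ?F = "Poly_Mapping.keys a \<union> Poly_Mapping.keys b"
  have "mdeg (a + b) = (\<Sum>i\<in>?F. Poly_Mapping.lookup (a + b) i)"
    by (rule mdeg_superset) (auto simp: keys_add_nat)
  also have "\<dots> = (\<Sum>i\<in>?F. Poly_Mapping.lookup a i) + (\<Sum>i\<in>?F. Poly_Mapping.lookup b i)"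
    by (simp add: lookup_add sum.distrib)
  also have "\<dots> = mdeg a + mdeg b"
    by (simp add: mdeg_superset[symmetric])
  finally show ?thesis .
qed

lemma mdeg_scal: "mdeg (scal j a) = j * mdeg a"
proof -
  have "mdeg (scal j a) = (\<Sum>i\<in>Poly_Mapping.keys a. Poly_Mapping.lookup (scal j a) i)"
    by (rule mdeg_superset) (auto simp: in_keys_iff)
  then show ?thesis by (simp add: mdeg_def sum_distrib_left)
qed

lemma mdeg_0_iff: "mdeg a = 0 \<longleftrightarrow> a = 0"
proof
  assume "mdeg a = 0"
  then have "\<forall>i\<in>Poly_Mapping.keys a. Poly_Mapping.lookup a i = 0" unfolding mdeg_def by simp
  then have "\<And>i. Poly_Mapping.lookup a i = 0" by (metis in_keys_iff)
  then show "a = 0" by (intro poly_mapping_eqI) simp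
qed (simp add: mdeg_def)

lemma mdvd_mdeg: "mdvd b a \<Longrightarrow> mdeg a = mdeg b + mdeg (a - b)"
  using minus_add_cancel_pm[of b a] mdeg_add[of "a - b" b] by simp

lemma mdvd_mdeg_le: "mdvd b a \<Longrightarrow> mdeg b \<le> mdeg a"
  using mdvd_mdeg by fastforce

lemma mdvd_mdeg_eq: "mdvd b a \<Longrightarrow> mdeg a \<le> mdeg b \<Longrightarrow> b = a"
proof -
  assume d: "mdvd b a" "mdeg a \<le> mdeg b"
  then have "mdeg (a - b) = 0" using mdvd_mdeg[OF d(1)] by simp
  then have "a - b = 0" by (simp add: mdeg_0_iff)
  then show "b = a" using minus_add_cancel_pm[OF d(1)] by simp
qed

lemma lookup_le_mdeg: "Poly_Mapping.lookup a i \<le> mdeg a"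
proof (cases "i \<in> Poly_Mapping.keys a")
  case True
  then show ?thesis unfolding mdeg_def by (rule member_le_sum) auto
next
  case False
  then show ?thesis by (simp add: in_keys_iff)
qed

lemma finite_deg_set: "finite {a. Poly_Mapping.keys a \<subseteq> {1..n} \<and> mdeg a = d}"
proof -
  let ?S = "{a. Poly_Mapping.keys a \<subseteq> {1..n} \<and> mdeg a = d}"
  have inj: "inj_on (\<lambda>a. restrict (Poly_Mapping.lookup a) {1..n}) ?S"
  proof (rule inj_onI)
    fix a b assume a: "a \<in> ?S" and b: "b \<in> ?S"
      and e: "restrict (Poly_Mapping.lookup a) {1..n} = restrict (Poly_Mapping.lookup b) {1..n}"
    show "a = b"
    proof (rule poly_mapping_eqI)
      fix i show "Poly_Mapping.lookup a i = Poly_Mapping.lookup b i"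
      proof (cases "i \<in> {1..n}")
        case True then show ?thesis using fun_cong[OF e, of i] by simp
      next
        case False
        then have "i \<notin> Poly_Mapping.keys a" "i \<notin> Poly_Mapping.keys b" using a b by auto
        then show ?thesis by (simp add: in_keys_iff)
      qed
    qed
  qed
  have sub: "(\<lambda>a. restrict (Poly_Mapping.lookup a) {1..n}) ` ?S \<subseteq> PiE {1..n} (\<lambda>_. {0..d})"
    using lookup_le_mdeg by auto
  have fin: "finite (PiE {1..n} (\<lambda>_. {0..d::nat}))" by (rule finite_PiE) auto
  have "finite ((\<lambda>a. restrict (Poly_Mapping.lookup a) {1..n}) ` ?S)" by (rule finite_subset[OF sub fin])
  then show ?thesis by (rule finite_imageD[OF _ inj])
qed

lemma monom_in_mideal:
  "(monom a :: 'k::field mpoly) \<in> mideal n M \<longleftrightarrow> Poly_Mapping.keys a \<subseteq> {1..n} \<and> (\<exists>b\<in>M. mdvd b a)"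
  by (simp add: mideal_def polyR_def monom_def)

lemma monom_inj: "(monom a :: 'k::field mpoly) = monom b \<longleftrightarrow> a = b"
  unfolding monom_def by (metis lookup_single_eq lookup_single_not_eq one_neq_zero)

lemma exists_min:
  assumes "a \<in> M"
  shows "\<exists>b\<in>M. mdvd b a \<and> (\<forall>c\<in>M. mdvd c b \<longrightarrow> c = b)"
  using assms
proof (induction "mdeg a" arbitrary: a rule: less_induct)
  case less
  show ?case
  proof (cases "\<forall>c\<in>M. mdvd c a \<longrightarrow> c = a")
    case True
    then show ?thesis using less.prems mdvd_refl by blast
  next
    case False
    then obtain c where c: "c \<in> M" "mdvd c a" "c \<noteq> a" by blast
    then have "mdeg c < mdeg a" using mdvd_mdeg_eq[of c a] mdvd_mdeg_le[of c a] by linarith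
    then obtain b where "b \<in> M" "mdvd b c" "\<forall>c'\<in>M. mdvd c' b \<longrightarrow> c' = b"
      using less.hyps c(1) by blast
    then show ?thesis using c(2) mdvd_trans by blast
  qed
qed

lemma mingens_char:
  assumes M: "\<forall>a\<in>M. Poly_Mapping.keys a \<subseteq> {1..n}"
  shows "mingens n (ideal_gen n (monom ` M) :: 'k::field mpoly set) = {a\<in>M. \<forall>b\<in>M. mdvd b a \<longrightarrow> b = a}"
proof -
  have I: "ideal_gen n (monom ` M) = (mideal n M :: 'k mpoly set)" by (rule ideal_gen_char[OF M])
  show ?thesis
  proof (rule set_eqI, rule iffI)
    fix a assume "a \<in> mingens n (ideal_gen n (monom ` M) :: 'k mpoly set)"
    then have a: "Poly_Mapping.keys a \<subseteq> {1..n}" "(monom a :: 'k mpoly) \<in> mideal n M"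
      "\<forall>b. (monom b :: 'k mpoly) \<in> mideal n M \<and> mdvd b a \<longrightarrow> b = a"
      unfolding mingens_def I by auto
    from a(2) obtain b where b: "b \<in> M" "mdvd b a" unfolding monom_in_mideal by blast
    have "(monom b :: 'k mpoly) \<in> mideal n M" using b M mdvd_refl[of b] unfolding monom_in_mideal by blast
    then have "b = a" using a(3) b(2) by blast
    moreover have "\<forall>c\<in>M. mdvd c a \<longrightarrow> c = a"
    proof (intro ballI impI)
      fix c assume "c \<in> M" "mdvd c a"
      then have "(monom c :: 'k mpoly) \<in> mideal n M" using M mdvd_refl[of c] unfolding monom_in_mideal by blast
      then show "c = a" using a(3) \<open>mdvd c a\<close> by blast
    qed
    ultimately show "a \<in> {a\<in>M. \<forall>b\<in>M. mdvd b a \<longrightarrow> b = a}" using b(1) by auto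
  next
    fix a assume a: "a \<in> {a\<in>M. \<forall>b\<in>M. mdvd b a \<longrightarrow> b = a}"
    have "Poly_Mapping.keys a \<subseteq> {1..n}" using a M by auto
    moreover have "(monom a :: 'k mpoly) \<in> mideal n M" using a M mdvd_refl[of a] unfolding monom_in_mideal by blast
    moreover have "b = a" if b1: "(monom b :: 'k mpoly) \<in> mideal n M" and b2: "mdvd b a" for b
    proof -
      obtain c where "c \<in> M" "mdvd c b" using b1 unfolding monom_in_mideal by blast
      then have "c = a" using a b2 mdvd_trans by blast
      then show "b = a" using \<open>mdvd c b\<close> b2 mdvd_antisym by blast
    qed
    ultimately show "a \<in> mingens n (ideal_gen n (monom ` M) :: 'k mpoly set)"
      unfolding mingens_def I by blast
  qed
qed



definition minset :: "(nat \<Rightarrow>\<^sub>0 nat) set \<Rightarrow> (nat \<Rightarrow>\<^sub>0 nat) set" where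
  "minset M = {a\<in>M. \<forall>b\<in>M. mdvd b a \<longrightarrow> b = a}"

lemma single_mdvd: "j \<le> Poly_Mapping.lookup c l \<Longrightarrow> mdvd (Poly_Mapping.single l j) c"
  unfolding mdvd_def by (simp add: lookup_single when_def)

lemma exists_bigger:
  assumes "mdeg u = mdeg u'" "u \<noteq> u'"
  shows "\<exists>l. Poly_Mapping.lookup u' l < Poly_Mapping.lookup u l"
proof (rule ccontr)
  assume "\<not> ?thesis"
  then have "mdvd u u'" unfolding mdvd_def by (simp add: not_less)
  then have "u = u'" using mdvd_mdeg_eq assms(1) by simp
  then show False using assms(2) by simp
qed

lemma minset_sub: "minset M \<subseteq> M" unfolding minset_def by blast

lemma minset_exists: "a \<in> M \<Longrightarrow> \<exists>b\<in>minset M. mdvd b a"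
  using exists_min[of a M] unfolding minset_def by blast

locale LS =
  fixes n k d1 d2 m :: nat and MI MJ :: "(nat \<Rightarrow>\<^sub>0 nat) set"
  assumes MI: "\<forall>a\<in>MI. Poly_Mapping.keys a \<subseteq> {1..n}"
    and MJ: "\<forall>a\<in>MJ. Poly_Mapping.keys a \<subseteq> {1..n}"
    and k: "k > 1"
    and GId: "\<forall>a\<in>minset MI. mdeg a = d1"
    and GJd: "\<forall>a\<in>minset MJ. mdeg a = d2"
    and mbound: "\<forall>u\<in>minset MI. \<forall>l\<in>Poly_Mapping.keys u. l \<le> m"
    and Jx: "\<forall>l\<in>{1..m}. \<exists>b\<in>MJ. mdvd b (Poly_Mapping.single l (k - 1))"
begin

abbreviation "GI \<equiv> minset MI"
abbreviation "GJ \<equiv> minset MJ"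
definition "M' = scal k ` GI"

lemma GI_keys: "u \<in> GI \<Longrightarrow> Poly_Mapping.keys u \<subseteq> {1..n}"
  using MI minset_sub by blast

lemma GI_finite: "finite GI"
proof (rule finite_subset[OF _ finite_deg_set[of n d1]])
  show "GI \<subseteq> {a. Poly_Mapping.keys a \<subseteq> {1..n} \<and> mdeg a = d1}" using GI_keys GId by blast
qed

lemma M'_finite: "finite M'" unfolding M'_def using GI_finite by simp

lemma M'_keys: "a \<in> M' \<Longrightarrow> Poly_Mapping.keys a \<subseteq> {1..n}"
proof -
  assume "a \<in> M'"
  then obtain u where "u \<in> GI" "a = scal k u" unfolding M'_def by blast
  then show ?thesis using GI_keys keys_scal[of k u] k by simp
qed

lemma M'_deg: "a \<in> M' \<Longrightarrow> mdeg a = k * d1"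
  unfolding M'_def using GId mdeg_scal by auto

lemma key_in_m: "u \<in> GI \<Longrightarrow> l \<in> Poly_Mapping.keys u \<Longrightarrow> l \<in> {1..m}"
  using GI_keys mbound by fastforce

lemma Jdiv: "l \<in> {1..m} \<Longrightarrow> k - 1 \<le> Poly_Mapping.lookup c l \<Longrightarrow> \<exists>b\<in>MJ. mdvd b c"
  using Jx single_mdvd mdvd_trans by blast

lemma M'_min: "minset M' = M'"
proof -
  have "b = a" if h: "a \<in> M'" "b \<in> M'" "mdvd b a" for a b
  proof -
    obtain u v where uv: "u \<in> GI" "a = scal k u" "v \<in> GI" "b = scal k v"
      using h(1,2) unfolding M'_def by blast
    then have "mdvd v u" using h(3) mdvd_scal_iff k by simp
    then have "v = u" using uv(1,3) minset_sub unfolding minset_def by blast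
    then show ?thesis using uv by simp
  qed
  then show ?thesis unfolding minset_def by blast
qed

lemma key_inj:
  assumes u: "u \<in> GI" "u' \<in> GI" and b: "b \<in> GJ" "b' \<in> GJ"
    and e: "scal k u + b = scal k u' + b'"
  shows "u = u'"
proof (rule ccontr)
  assume ne: "u \<noteq> u'"
  obtain l where l: "Poly_Mapping.lookup u' l < Poly_Mapping.lookup u l"
    using exists_bigger[OF _ ne] GId u by auto
  then have lk: "l \<in> Poly_Mapping.keys u" by (auto simp: in_keys_iff)
  have "k * Poly_Mapping.lookup u l + Poly_Mapping.lookup b l = k * Poly_Mapping.lookup u' l + Poly_Mapping.lookup b' l"
    using arg_cong[OF e, of "\<lambda>x. Poly_Mapping.lookup x l"] by (simp add: lookup_add)
  moreover have "k * Poly_Mapping.lookup u' l + k \<le> k * Poly_Mapping.lookup u l"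
    using l by (metis Suc_leI mult_Suc_right mult_le_mono2 add.commute)
  ultimately have bl: "k \<le> Poly_Mapping.lookup b' l" by linarith
  obtain b0 where b0: "b0 \<in> MJ" "mdvd b0 (Poly_Mapping.single l (k - 1))"
    using Jx key_in_m[OF u(1) lk] by blast
  have "mdvd b0 b'" using b0(2) single_mdvd[of "k - 1" b' l] bl mdvd_trans by simp
  then have "b0 = b'" using b(2) b0(1) unfolding minset_def by blast
  then have "Poly_Mapping.lookup b' l \<le> k - 1" using b0(2) unfolding mdvd_def
    by (metis lookup_single_eq)
  then show False using bl k by simp
qed

lemma sum_inj: "inj_on (\<lambda>(a, b). a + b) (M' \<times> GJ)"
proof (rule inj_onI, clarify)
  fix a b a' b' assume "a \<in> M'" "b \<in> GJ" "a' \<in> M'" "b' \<in> GJ" and e: "a + b = a' + b'"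
  then obtain u u' where "u \<in> GI" "u' \<in> GI" "a = scal k u" "a' = scal k u'" unfolding M'_def by auto
  then have "u = u'" using key_inj \<open>b \<in> GJ\<close> \<open>b' \<in> GJ\<close> e by blast
  then show "a = a' \<and> b = b'" using e \<open>a = scal k u\<close> \<open>a' = scal k u'\<close> by simp
qed

lemma prod_min: "minset {a + b | a b. a \<in> M' \<and> b \<in> MJ} = (\<lambda>(a, b). a + b) ` (M' \<times> GJ)"
  (is "minset ?S = ?P")
proof
  show "minset ?S \<subseteq> ?P"
  proof
    fix x assume x: "x \<in> minset ?S"
    then obtain a b where ab: "x = a + b" "a \<in> M'" "b \<in> MJ" unfolding minset_def by blast
    obtain b' where b': "b' \<in> GJ" "mdvd b' b" using minset_exists[OF ab(3)] by blast
    have "a + b' \<in> ?S" using ab(2) b' minset_sub by blast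
    moreover have "mdvd (a + b') x" using ab(1) b'(2) mdvd_add_mono mdvd_refl by blast
    ultimately have "a + b' = x" using x unfolding minset_def by blast
    then show "x \<in> ?P" using ab(2) b'(1) by force
  qed
next
  show "?P \<subseteq> minset ?S"
  proof
    fix x assume "x \<in> ?P"
    then obtain a b where ab: "x = a + b" "a \<in> M'" "b \<in> GJ" by auto
    have xS: "x \<in> ?S" using ab minset_sub by blast
    have xd: "mdeg x = k * d1 + d2" using ab M'_deg GJd mdeg_add by simp
    have "y = x" if y: "y \<in> ?S" "mdvd y x" for y
    proof -
      obtain a' b'' where ab': "y = a' + b''" "a' \<in> M'" "b'' \<in> MJ" using y(1) by blast
      obtain b' where b': "b' \<in> GJ" "mdvd b' b''" using minset_exists[OF ab'(3)] by blast
      have d1: "mdvd (a' + b') y" using ab'(1) b'(2) mdvd_add_mono mdvd_refl by blast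
      have "mdeg (a' + b') = k * d1 + d2" using ab' b' M'_deg GJd mdeg_add by simp
      then have "a' + b' = x" using mdvd_mdeg_eq[OF mdvd_trans[OF d1 y(2)]] xd by simp
      then show "y = x" using d1 y(2) mdvd_antisym by blast
    qed
    then show "x \<in> minset ?S" using xS unfolding minset_def by blast
  qed
qed

lemma card_prod: "card ((\<lambda>(a, b). a + b) ` (M' \<times> GJ)) = card M' * card GJ"
  using card_image[OF sum_inj] card_cartesian_product by simp

lemma card_M': "card M' = card GI"
  unfolding M'_def by (rule card_image) (meson inj_onI scal_inj k less_trans zero_less_one)

lemma kernel_key:
  assumes u: "u \<in> GI" "u' \<in> GI" "u \<noteq> u'" and d: "mdvd (scal k u') (c + scal k u)"
  shows "\<exists>b\<in>MJ. mdvd b c"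
proof -
  obtain l where l: "Poly_Mapping.lookup u l < Poly_Mapping.lookup u' l"
    using exists_bigger[of u' u] GId u by auto
  then have lk: "l \<in> Poly_Mapping.keys u'" by (auto simp: in_keys_iff)
  have "k * Poly_Mapping.lookup u' l \<le> Poly_Mapping.lookup c l + k * Poly_Mapping.lookup u l"
    using d unfolding mdvd_def by (simp add: lookup_add)
  moreover have "k * Poly_Mapping.lookup u l + k \<le> k * Poly_Mapping.lookup u' l"
    using l by (metis Suc_leI mult_Suc_right mult_le_mono2 add.commute)
  ultimately have "k - 1 \<le> Poly_Mapping.lookup c l" by linarith
  then show ?thesis using Jdiv key_in_m[OF u(2) lk] by blast
qed

end


definition lcmv :: "(nat \<Rightarrow>\<^sub>0 nat) \<Rightarrow> (nat \<Rightarrow>\<^sub>0 nat) \<Rightarrow> (nat \<Rightarrow>\<^sub>0 nat)" where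
  "lcmv a b = Abs_poly_mapping (\<lambda>x. max (Poly_Mapping.lookup a x) (Poly_Mapping.lookup b x))"

lemma lookup_lcmv[simp]: "Poly_Mapping.lookup (lcmv a b) x = max (Poly_Mapping.lookup a x) (Poly_Mapping.lookup b x)"
proof -
  have "{x. max (Poly_Mapping.lookup a x) (Poly_Mapping.lookup b x) \<noteq> 0} \<subseteq> Poly_Mapping.keys a \<union> Poly_Mapping.keys b"
    by (intro subsetI) (simp add: in_keys_iff max_def split: if_splits)
  then have "finite {x. max (Poly_Mapping.lookup a x) (Poly_Mapping.lookup b x) \<noteq> 0}"
    by (rule finite_subset) simp
  then show ?thesis unfolding lcmv_def by simp
qed

lemma lcmv_dvd1: "mdvd a (lcmv a b)" unfolding mdvd_def by simp
lemma lcmv_dvd2: "mdvd b (lcmv a b)" unfolding mdvd_def by simp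
lemma lcmv_least: "mdvd a c \<Longrightarrow> mdvd b c \<Longrightarrow> mdvd (lcmv a b) c" unfolding mdvd_def by simp
lemma keys_lcmv: "Poly_Mapping.keys (lcmv a b) = Poly_Mapping.keys a \<union> Poly_Mapping.keys b"
  by (rule set_eqI) (simp add: in_keys_iff)

lemma keys_minus_sub: "Poly_Mapping.keys (a - b :: nat \<Rightarrow>\<^sub>0 nat) \<subseteq> Poly_Mapping.keys a"
  by (auto simp: in_keys_iff lookup_minus)

lemma single_mult_monom_minus:
  "mdvd e L \<Longrightarrow> mdvd L D \<Longrightarrow>
    Poly_Mapping.single (D - L) c * monom (L - e) = Poly_Mapping.single (D - e) (c::'k::field)"
proof -
  assume a: "mdvd e L" "mdvd L D"
  have "D - L + (L - e) = D - e"
    by (rule poly_mapping_eqI) (use a in \<open>simp add: lookup_add lookup_minus mdvd_def\<close>)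
  then show ?thesis by (simp add: single_mult_monom)
qed

lemma monom_minus_mult: "mdvd e L \<Longrightarrow> monom (L - e) * monom e = (monom L :: 'k::field mpoly)"
  by (simp add: monom_add minus_add_cancel_pm)

lemma sum_single: "(\<Sum>i\<in>S. Poly_Mapping.single x (f i)) = Poly_Mapping.single x (\<Sum>i\<in>S. f i :: 'k::field)"
  by (rule poly_mapping_eqI) (simp add: lookup_sum lookup_single when_def)

locale LS2 = LS +
  fixes es :: "(nat \<Rightarrow>\<^sub>0 nat) list"
  assumes es_dist: "distinct es" and es_set: "set es = M'"
begin

abbreviation "t \<equiv> length es"

lemma es_keys: "i < t \<Longrightarrow> Poly_Mapping.keys (es ! i) \<subseteq> {1..n}"
  by (metis M'_keys es_set nth_mem)

definition sig :: "nat \<Rightarrow> nat \<Rightarrow> nat \<Rightarrow> 'k::field mpoly" where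
  "sig i j i' = (if i' = i then monom (lcmv (es!i) (es!j) - es!i) else 0)
              - (if i' = j then monom (lcmv (es!i) (es!j) - es!j) else 0)"

definition Amat :: "nat \<Rightarrow> nat \<Rightarrow> 'k::field mpoly" where
  "Amat i' col = sig (col div t) (col mod t) i'"

lemma sig_polyR: "i < t \<Longrightarrow> j < t \<Longrightarrow> (sig i j i' :: 'k::field mpoly) \<in> polyR n"
proof -
  assume ij: "i < t" "j < t"
  have L: "Poly_Mapping.keys (lcmv (es!i) (es!j)) \<subseteq> {1..n}"
    using es_keys ij by (simp add: keys_lcmv)
  have "(monom (lcmv (es!i) (es!j) - es!i) :: 'k mpoly) \<in> polyR n"
    "(monom (lcmv (es!i) (es!j) - es!j) :: 'k mpoly) \<in> polyR n"
    using L keys_minus_sub by (blast intro: polyR_monom)+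
  then show ?thesis unfolding sig_def by (auto intro!: polyR_diff polyR_uminus)
qed

lemma sig_out: "i < t \<Longrightarrow> j < t \<Longrightarrow> t \<le> i' \<Longrightarrow> sig i j i' = 0"
  unfolding sig_def by auto

lemma sig_zero: "i < t \<Longrightarrow> j < t \<Longrightarrow> (\<Sum>i'<t. sig i j i' * monom (es ! i')) = (0::'k::field mpoly)"
proof -
  assume ij: "i < t" "j < t"
  let ?L = "lcmv (es!i) (es!j)"
  have "(\<Sum>i'<t. sig i j i' * monom (es ! i')) =
     (\<Sum>i'<t. (if i' = i then monom (?L - es!i) * monom (es!i) else 0)) -
     (\<Sum>i'<t. (if i' = j then monom (?L - es!j) * monom (es!j) else (0::'k mpoly)))"
    unfolding sum_subtractf[symmetric] sig_def by (intro sum.cong) (auto simp: algebra_simps)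
  also have "\<dots> = monom (?L - es!i) * monom (es!i) - monom (?L - es!j) * monom (es!j)"
    using ij by simp
  also have "\<dots> = 0" by (simp add: monom_minus_mult lcmv_dvd1 lcmv_dvd2)
  finally show ?thesis .
qed

abbreviation "N \<equiv> image_phi n t (t * t) Amat"

lemma N_add: "v \<in> (N :: (nat \<Rightarrow> 'k::field mpoly) set) \<Longrightarrow> w \<in> N \<Longrightarrow> (\<lambda>i. v i + w i) \<in> N"
proof -
  assume "v \<in> N" "w \<in> N"
  then obtain r1 r2 where r: "\<forall>j<t*t. r1 j \<in> polyR n" "v = (\<lambda>i. if i < t then \<Sum>j<t*t. Amat i j * r1 j else 0)"
    "\<forall>j<t*t. r2 j \<in> polyR n" "w = (\<lambda>i. if i < t then \<Sum>j<t*t. Amat i j * r2 j else 0)"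
    unfolding image_phi_def by blast
  have e: "(\<lambda>i. v i + w i) = (\<lambda>i. if i < t then \<Sum>j<t*t. Amat i j * (r1 j + r2 j) else 0)"
    unfolding r(2,4) by (auto simp: algebra_simps sum.distrib)
  have p: "\<forall>j<t*t. r1 j + r2 j \<in> polyR n" using r polyR_add by blast
  show ?thesis unfolding image_phi_def
    by (rule CollectI, rule exI[of _ "\<lambda>j. r1 j + r2 j"], rule conjI[OF p e])
qed

lemma N_zero: "(\<lambda>i. 0) \<in> (N :: (nat \<Rightarrow> 'k::field mpoly) set)"
  unfolding image_phi_def by (rule CollectI, rule exI[of _ "\<lambda>_. 0"]) auto

lemma N_sum: "finite X \<Longrightarrow> (\<And>x. x \<in> X \<Longrightarrow> f x \<in> (N :: (nat \<Rightarrow> 'k::field mpoly) set)) \<Longrightarrow> (\<lambda>i. \<Sum>x\<in>X. f x i) \<in> N"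
proof (induction X rule: finite_induct)
  case empty
  then show ?case using N_zero by simp
next
  case (insert x F)
  then have "(\<lambda>i. f x i + (\<Sum>x\<in>F. f x i)) \<in> N" using N_add[of "f x" "\<lambda>i. \<Sum>x\<in>F. f x i"] by simp
  then show ?case using insert by simp
qed

lemma N_gen: "p \<in> polyR n \<Longrightarrow> i < t \<Longrightarrow> j < t \<Longrightarrow> (\<lambda>i'. p * sig i j i') \<in> (N :: (nat \<Rightarrow> 'k::field mpoly) set)"
proof -
  assume p: "p \<in> polyR n" and ij: "i < t" "j < t"
  define r where "r = (\<lambda>col. if col = i * t + j then p else (0::'k mpoly))"
  have col: "i * t + j < t * t"
  proof -
    have "Suc i * t \<le> t * t" using ij(1) by (intro mult_le_mono1) simp
    then show ?thesis using ij(2) by simp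
  qed
  have cd: "(i * t + j) div t = i" "(i * t + j) mod t = j" using ij(2)
    by (metis add.commute add_cancel_right_left div_less div_mult_self1 less_nat_zero_code) (simp add: ij(2))
  have "(\<lambda>i'. p * sig i j i') = (\<lambda>i'. if i' < t then \<Sum>c<t*t. Amat i' c * r c else 0)"
  proof
    fix i'
    have "(\<Sum>c<t*t. Amat i' c * r c) = (\<Sum>c<t*t. if c = i * t + j then Amat i' c * p else 0)"
      by (rule sum.cong) (auto simp: r_def)
    also have "\<dots> = Amat i' (i * t + j) * p" using col by simp
    also have "Amat i' (i * t + j) = sig i j i'" by (simp only: Amat_def cd)
    finally have S: "(\<Sum>c<t*t. Amat i' c * r c) = p * sig i j i'" by (simp add: mult.commute)
    show "p * sig i j i' = (if i' < t then \<Sum>c<t*t. Amat i' c * r c else 0)"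
    proof (cases "i' < t")
      case True then show ?thesis using S by simp
    next
      case False then show ?thesis using ij by (simp add: sig_def)
    qed
  qed
  moreover have "\<forall>c<t*t. r c \<in> polyR n" using p unfolding r_def by simp
  ultimately show ?thesis unfolding image_phi_def
    by (intro CollectI exI[of _ r] conjI) auto
qed

end


context LS2 begin

lemma Nw:
  fixes a :: "nat \<Rightarrow> 'k::field"
  assumes D: "Poly_Mapping.keys D \<subseteq> {1..n}"
    and s0: "(\<Sum>i\<in>{i\<in>{..<t}. mdvd (es!i) D}. a i) = 0"
  shows "(\<lambda>i'. if i' \<in> {i\<in>{..<t}. mdvd (es!i) D} then Poly_Mapping.single (D - es!i') (a i') else 0) \<in> (N :: (nat \<Rightarrow> 'k mpoly) set)"
proof -
  let ?S = "{i\<in>{..<t}. mdvd (es!i) D}"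
  have finS: "finite ?S" by simp
  show ?thesis
  proof (cases "?S = {}")
    case True
    then have eq0: "(\<lambda>i'. if i' \<in> ?S then Poly_Mapping.single (D - es!i') (a i') else (0::'k mpoly)) = (\<lambda>i. 0)"
      by (intro ext) auto
    show ?thesis unfolding eq0 by (rule N_zero)
  next
    case False
    then obtain i0 where i0: "i0 \<in> ?S" by blast
    define L where "L i = lcmv (es!i) (es!i0)" for i
    define p where "p i = (Poly_Mapping.single (D - L i) (a i) :: 'k mpoly)" for i
    have LD: "mdvd (L i) D" if "i \<in> ?S" for i
      unfolding L_def using that i0 by (intro lcmv_least) auto
    have pR: "p i \<in> polyR n" for i
      unfolding p_def using D keys_minus_sub[of D "L i"] by (intro polyR_single) blast
    have eq: "p i * sig i i0 i' = (if i' = i then Poly_Mapping.single (D - es!i) (a i) else 0)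
        - (if i' = i0 then Poly_Mapping.single (D - es!i0) (a i) else 0)" if i: "i \<in> ?S" for i i'
    proof -
      have "p i * sig i i0 i' = (if i' = i then p i * monom (L i - es!i) else 0)
           - (if i' = i0 then p i * monom (L i - es!i0) else 0)"
        unfolding sig_def L_def by (simp add: right_diff_distrib)
      also have "p i * monom (L i - es!i) = Poly_Mapping.single (D - es!i) (a i)"
        unfolding p_def L_def by (rule single_mult_monom_minus[OF lcmv_dvd1 LD[OF i, unfolded L_def]])
      also have "p i * monom (L i - es!i0) = Poly_Mapping.single (D - es!i0) (a i)"
        unfolding p_def L_def by (rule single_mult_monom_minus[OF lcmv_dvd2 LD[OF i, unfolded L_def]])
      finally show ?thesis .
    qed
    have inN: "(\<lambda>i'. \<Sum>i\<in>?S. p i * sig i i0 i') \<in> (N :: (nat \<Rightarrow> 'k mpoly) set)"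
    proof (rule N_sum[OF finS])
      fix i assume "i \<in> ?S"
      then show "(\<lambda>i'. p i * sig i i0 i') \<in> (N :: (nat \<Rightarrow> 'k mpoly) set)"
        using N_gen[OF pR] i0 by simp
    qed
    have "(\<Sum>i\<in>?S. p i * sig i i0 i') = (if i' \<in> ?S then Poly_Mapping.single (D - es!i') (a i') else 0)" for i'
    proof -
      have "(\<Sum>i\<in>?S. p i * sig i i0 i') =
          (\<Sum>i\<in>?S. (if i' = i then Poly_Mapping.single (D - es!i) (a i) else 0))
        - (\<Sum>i\<in>?S. (if i' = i0 then Poly_Mapping.single (D - es!i0) (a i) else 0))"
        unfolding sum_subtractf[symmetric] by (rule sum.cong) (simp_all add: eq)
      also have "(\<Sum>i\<in>?S. (if i' = i then Poly_Mapping.single (D - es!i) (a i) else 0))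
          = (if i' \<in> ?S then Poly_Mapping.single (D - es!i') (a i') else 0)"
        using sum.delta[OF finS, of i' "\<lambda>i. Poly_Mapping.single (D - es!i) (a i)"]
        by (simp add: eq_commute[of i'] cong: if_cong)
      also have "(\<Sum>i\<in>?S. (if i' = i0 then Poly_Mapping.single (D - es!i0) (a i) else 0)) = (0 :: 'k mpoly)"
        using s0 by (cases "i' = i0") (simp_all add: sum_single)
      finally show ?thesis by simp
    qed
    then show ?thesis using inN by simp
  qed
qed

lemma kernel_sub_N:
  assumes v: "v \<in> kernel_psi n (map monom es :: 'k::field mpoly list)"
  shows "v \<in> N"
proof -
  have vR: "\<And>i. v i \<in> polyR n" and v0: "\<And>i. t \<le> i \<Longrightarrow> v i = 0"
    and vs: "(\<Sum>i<t. v i * map monom es ! i) = 0"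
    using v unfolding kernel_psi_def by auto
  define Dset where "Dset = (\<Union>i<t. (\<lambda>c. c + es!i) ` Poly_Mapping.keys (v i))"
  define S where "S D = {i\<in>{..<t}. mdvd (es!i) D}" for D
  define w where "w D = (\<lambda>i'. if i' \<in> S D then Poly_Mapping.single (D - es!i') (Poly_Mapping.lookup (v i') (D - es!i')) else 0)" for D
  have finD: "finite Dset" unfolding Dset_def by simp
  have wN: "w D \<in> N" if D: "D \<in> Dset" for D
  proof -
    obtain i c where ic: "i < t" "c \<in> Poly_Mapping.keys (v i)" "D = c + es!i"
      using D unfolding Dset_def by blast
    have "Poly_Mapping.keys c \<subseteq> {1..n}" using vR[of i] ic(2) unfolding polyR_def by blast
    then have kD: "Poly_Mapping.keys D \<subseteq> {1..n}" using ic(3) es_keys[OF ic(1)] by (simp add: keys_add_nat)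
    have "0 = Poly_Mapping.lookup (\<Sum>i<t. v i * map monom es ! i) D" using vs by simp
    also have "\<dots> = (\<Sum>i<t. if mdvd (es!i) D then Poly_Mapping.lookup (v i) (D - es!i) else 0)"
      by (simp add: lookup_sum lookup_mult_monom)
    also have "\<dots> = (\<Sum>i\<in>S D. Poly_Mapping.lookup (v i) (D - es!i))"
      unfolding S_def by (rule sum.inter_filter[symmetric]) simp
    finally have "(\<Sum>i\<in>S D. Poly_Mapping.lookup (v i) (D - es!i)) = 0" by simp
    then show ?thesis unfolding w_def S_def by (rule Nw[OF kD])
  qed
  have "v = (\<lambda>i'. \<Sum>D\<in>Dset. w D i')"
  proof
    fix i'
    show "v i' = (\<Sum>D\<in>Dset. w D i')"
    proof (cases "i' < t")
      case False
      then show ?thesis using v0 unfolding w_def S_def by simp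
    next
      case True
      let ?e = "es!i'"
      let ?Im = "(\<lambda>c. c + ?e) ` Poly_Mapping.keys (v i')"
      have sub: "?Im \<subseteq> Dset" unfolding Dset_def using True by blast
      have "(\<Sum>D\<in>Dset. w D i') = (\<Sum>D\<in>?Im. w D i')"
      proof (rule sum.mono_neutral_right[OF finD sub], rule ballI)
        fix D assume D: "D \<in> Dset - ?Im"
        show "w D i' = 0"
        proof (cases "mdvd ?e D")
          case True
          have "D - ?e \<notin> Poly_Mapping.keys (v i')"
          proof
            assume "D - ?e \<in> Poly_Mapping.keys (v i')"
            then have "(D - ?e) + ?e \<in> ?Im" by blast
            then show False using D minus_add_cancel_pm[OF True] by simp
          qed
          then show ?thesis unfolding w_def by (simp add: in_keys_iff)
        next
          case False
          then show ?thesis unfolding w_def S_def by simp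
        qed
      qed
      also have "\<dots> = (\<Sum>c\<in>Poly_Mapping.keys (v i'). w (c + ?e) i')"
        by (subst sum.reindex) (auto simp: inj_on_def)
      also have "\<dots> = (\<Sum>c\<in>Poly_Mapping.keys (v i'). Poly_Mapping.single c (Poly_Mapping.lookup (v i') c))"
        unfolding w_def S_def using True by (intro sum.cong) (auto simp: mdvd_add_left)
      also have "\<dots> = v i'" by (rule poly_sum_singles)
      finally show ?thesis by simp
    qed
  qed
  moreover have "(\<lambda>i'. \<Sum>D\<in>Dset. w D i') \<in> N" using N_sum[OF finD wN] by simp
  ultimately show ?thesis by simp
qed

end


context LS2 begin

lemma Amat_polyR: "i < t \<Longrightarrow> c < t * t \<Longrightarrow> (Amat i c :: 'k::field mpoly) \<in> polyR n"
proof -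
  assume "i < t" "c < t * t"
  then have "t > 0" by (cases t) auto
  have "c div t < t" using \<open>c < t * t\<close> by (simp add: less_mult_imp_div_less)
  moreover have "c mod t < t" using \<open>t > 0\<close> by simp
  ultimately show ?thesis unfolding Amat_def by (rule sig_polyR)
qed

lemma Amat_zero: "c < t * t \<Longrightarrow> (\<Sum>i<t. Amat i c * monom (es ! i)) = (0::'k::field mpoly)"
proof -
  assume "c < t * t"
  then have "t > 0" by (cases t) auto
  have "c div t < t" using \<open>c < t * t\<close> by (simp add: less_mult_imp_div_less)
  moreover have "c mod t < t" using \<open>t > 0\<close> by simp
  ultimately show ?thesis unfolding Amat_def by (rule sig_zero)
qed

lemma N_sub_kernel:
  assumes v: "v \<in> (N :: (nat \<Rightarrow> 'k::field mpoly) set)"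
  shows "v \<in> kernel_psi n (map monom es :: 'k mpoly list)"
proof -
  obtain r where r: "\<forall>j<t*t. r j \<in> polyR n" "v = (\<lambda>i. if i < t then \<Sum>j<t*t. Amat i j * r j else 0)"
    using v unfolding image_phi_def by blast
  have "v i \<in> polyR n" for i
    unfolding r(2) using r(1) Amat_polyR by (auto intro!: polyR_sum polyR_mult)
  moreover have "\<forall>i\<ge>length (map monom es :: 'k mpoly list). v i = 0" using r(2) by simp
  moreover have "(\<Sum>i<length (map monom es :: 'k mpoly list). v i * (map monom es :: 'k mpoly list) ! i) = 0"
  proof -
    have "(\<Sum>i<t. v i * (map monom es :: 'k mpoly list) ! i) = (\<Sum>i<t. \<Sum>j<t*t. r j * (Amat i j * monom (es ! i)))"
      unfolding r(2) by (intro sum.cong) (auto simp: sum_distrib_right mult.assoc mult.commute[of "Amat _ _"])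
    also have "\<dots> = (\<Sum>j<t*t. r j * (\<Sum>i<t. Amat i j * monom (es ! i)))"
      by (subst sum.swap) (simp add: sum_distrib_left)
    also have "\<dots> = 0" by (rule sum.neutral) (auto simp: Amat_zero)
    finally show ?thesis by simp
  qed
  ultimately show ?thesis unfolding kernel_psi_def by blast
qed

lemma kernel_in_J:
  assumes v: "v \<in> kernel_psi n (map monom es :: 'k::field mpoly list)" and i: "i < t"
  shows "v i \<in> mideal n MJ"
proof -
  have vR: "\<And>i. v i \<in> polyR n" and vs: "(\<Sum>i<t. v i * map monom es ! i) = 0"
    using v unfolding kernel_psi_def by auto
  have "\<exists>b\<in>MJ. mdvd b c" if c: "c \<in> Poly_Mapping.keys (v i)" for c
  proof -
    define D where "D = c + es!i"
    define f where "f j = (if mdvd (es!j) D then Poly_Mapping.lookup (v j) (D - es!j) else 0)" for j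
    have "0 = Poly_Mapping.lookup (\<Sum>i<t. v i * map monom es ! i) D" using vs by simp
    also have "\<dots> = (\<Sum>j<t. f j)" unfolding f_def by (simp add: lookup_sum lookup_mult_monom)
    also have "\<dots> = f i + (\<Sum>j\<in>{..<t} - {i}. f j)" using i by (simp add: sum.remove)
    finally have s: "f i + (\<Sum>j\<in>{..<t} - {i}. f j) = 0" by simp
    have fi: "f i \<noteq> 0" unfolding f_def D_def using c by (simp add: mdvd_add_left in_keys_iff)
    obtain j where j: "j \<in> {..<t} - {i}" "f j \<noteq> 0"
    proof (rule ccontr)
      assume "\<not> thesis"
      then have "\<forall>j\<in>{..<t} - {i}. f j = 0" using that by blast
      then show False using s fi by simp
    qed
    then have dj: "mdvd (es!j) D" unfolding f_def by (auto split: if_splits)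
    have ne: "es!i \<noteq> es!j" using j i es_dist by (simp add: nth_eq_iff_index_eq)
    have "es!i \<in> M'" "es!j \<in> M'" using i j es_set nth_mem by auto
    then obtain u u' where u: "u \<in> GI" "es!i = scal k u" "u' \<in> GI" "es!j = scal k u'"
      unfolding M'_def by blast
    then have "u \<noteq> u'" using ne by auto
    show ?thesis using kernel_key[OF u(1) u(3) \<open>u \<noteq> u'\<close>] dj u(2,4) unfolding D_def by simp
  qed
  then show ?thesis using vR unfolding mideal_def by blast
qed

end


lemma one_polyR: "(1::'k::field mpoly) \<in> polyR n"
  unfolding polyR_def by simp

lemma var_pow: "(var l :: 'k::field mpoly) ^ j = monom (Poly_Mapping.single l j)"
  unfolding var_def monom_pow scal_single ..

theorem lemma2p5:
  fixes n d1 d2 k :: nat and I J :: "'k::field mpoly set"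
  assumes "monomial_ideal n I" and "monomial_ideal n J"
    and "\<forall>a\<in>mingens n I. mdeg a = d1"
    and "\<forall>a\<in>mingens n J. mdeg a = d2"
    and "k > 1"
    and "ideal_gen n ((\<lambda>i. var i ^ (k - 1)) `
           {1..Max (insert 0 (\<Union>a\<in>mingens n I. Poly_Mapping.keys a))}) \<subseteq> J"
  shows "conjoined n (frob_pow n k I) J"
proof -
  obtain MI where MI: "\<forall>a\<in>MI. Poly_Mapping.keys a \<subseteq> {1..n}" "I = ideal_gen n (monom ` MI)"
    using assms(1) unfolding monomial_ideal_def by blast
  obtain MJ where MJ: "\<forall>a\<in>MJ. Poly_Mapping.keys a \<subseteq> {1..n}" "J = ideal_gen n (monom ` MJ)"
    using assms(2) unfolding monomial_ideal_def by blast
  have GI: "mingens n I = minset MI" unfolding MI(2) minset_def by (rule mingens_char[OF MI(1)])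
  have GJ: "mingens n J = minset MJ" unfolding MJ(2) minset_def by (rule mingens_char[OF MJ(1)])
  have Jm: "J = mideal n MJ" unfolding MJ(2) by (rule ideal_gen_char[OF MJ(1)])
  define m where "m = Max (insert 0 (\<Union>a\<in>mingens n I. Poly_Mapping.keys a))"
  have finGI: "finite (minset MI)"
  proof (rule finite_subset[OF _ finite_deg_set[of n d1]])
    show "minset MI \<subseteq> {a. Poly_Mapping.keys a \<subseteq> {1..n} \<and> mdeg a = d1}"
      using MI(1) minset_sub assms(3) GI by blast
  qed
  have mb: "\<forall>u\<in>minset MI. \<forall>l\<in>Poly_Mapping.keys u. l \<le> m"
  proof (intro ballI)
    fix u l assume "u \<in> minset MI" "l \<in> Poly_Mapping.keys u"
    moreover have "finite (insert 0 (\<Union>a\<in>mingens n I. Poly_Mapping.keys a))" using finGI GI by simp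
    ultimately show "l \<le> m" unfolding m_def using GI by (intro Max_ge) auto
  qed
  have Jx: "\<forall>l\<in>{1..m}. \<exists>b\<in>MJ. mdvd b (Poly_Mapping.single l (k - 1))"
  proof
    fix l assume l: "l \<in> {1..m}"
    have "1 * (var l :: 'k mpoly) ^ (k - 1) \<in> ideal_gen n ((\<lambda>i. var i ^ (k - 1)) ` {1..m})"
      using l by (intro ideal_gen_gen one_polyR) auto
    then have "(monom (Poly_Mapping.single l (k - 1)) :: 'k mpoly) \<in> mideal n MJ"
      using assms(6) Jm unfolding m_def[symmetric] var_pow by auto
    then show "\<exists>b\<in>MJ. mdvd b (Poly_Mapping.single l (k - 1))" unfolding monom_in_mideal by blast
  qed
  interpret L: LS n k d1 d2 m MI MJ
    using MI(1) MJ(1) assms(3,4,5) GI GJ mb Jx by unfold_locales auto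
  obtain es where es: "distinct es" "set es = L.M'" using finite_distinct_list[OF L.M'_finite] by blast
  interpret L2: LS2 n k d1 d2 m MI MJ es
    using es by unfold_locales auto
  define I' where "I' = frob_pow n k I"
  have I'eq: "I' = ideal_gen n (monom ` L.M')"
  proof -
    have "(\<lambda>u. u ^ k) ` G n I = (monom ` L.M' :: 'k mpoly set)"
      unfolding G_def GI L.M'_def by (simp add: image_image monom_pow)
    then show ?thesis unfolding I'_def frob_pow_def by simp
  qed
  have I'm: "I' = mideal n L.M'" unfolding I'eq by (rule ideal_gen_char) (use L.M'_keys in blast)
  have GI': "mingens n I' = L.M'"
    unfolding I'eq using mingens_char[of L.M' n] L.M'_keys L.M'_min unfolding minset_def by auto
  have monom_inj_on: "inj_on (monom :: _ \<Rightarrow> 'k mpoly) X" for X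
    by (rule inj_onI) (simp add: monom_inj)
  define S where "S = {a + b | a b. a \<in> L.M' \<and> b \<in> MJ}"
  have Skeys: "\<forall>a\<in>S. Poly_Mapping.keys a \<subseteq> {1..n}"
  proof
    fix s assume "s \<in> S"
    then obtain a b where ab: "s = a + b" "a \<in> L.M'" "b \<in> MJ" unfolding S_def by blast
    have "Poly_Mapping.keys a \<subseteq> {1..n}" "Poly_Mapping.keys b \<subseteq> {1..n}"
      using L.M'_keys[OF ab(2)] MJ(1) ab(3) by auto
    then show "Poly_Mapping.keys s \<subseteq> {1..n}" unfolding ab(1) keys_add_nat by (rule Un_least)
  qed
  have prod_eq: "ideal_prod n I' J = ideal_gen n (monom ` S)"
  proof
    show "ideal_prod n I' J \<subseteq> ideal_gen n (monom ` S)"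
      unfolding ideal_prod_def
    proof (rule ideal_gen_least[OF is_id_ideal_gen])
      show "{f * g |f g. f \<in> I' \<and> g \<in> J} \<subseteq> ideal_gen n (monom ` S)"
      proof
        fix x assume "x \<in> {f * g |f g. f \<in> I' \<and> g \<in> J}"
        then obtain f g where fg: "x = f * g" "f \<in> mideal n L.M'" "g \<in> mideal n MJ"
          using I'm Jm by blast
        have "x \<in> polyR n" using fg polyR_mult unfolding mideal_def by blast
        moreover have "\<forall>c\<in>Poly_Mapping.keys x. \<exists>s\<in>S. mdvd s c"
        proof
          fix c assume "c \<in> Poly_Mapping.keys x"
          then obtain c1 c2 where c: "c = c1 + c2" "c1 \<in> Poly_Mapping.keys f" "c2 \<in> Poly_Mapping.keys g"
            using keys_mult[of f g] fg(1) by blast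
          obtain a where a: "a \<in> L.M'" "mdvd a c1" using fg(2) c(2) unfolding mideal_def by blast
          obtain b where b: "b \<in> MJ" "mdvd b c2" using fg(3) c(3) unfolding mideal_def by blast
          have "a + b \<in> S" unfolding S_def using a b by blast
          then show "\<exists>s\<in>S. mdvd s c" using c(1) mdvd_add_mono[OF a(2) b(2)] by blast
        qed
        ultimately show "x \<in> ideal_gen n (monom ` S)"
          unfolding ideal_gen_char[OF Skeys] mideal_def by blast
      qed
    qed
  next
    show "ideal_gen n (monom ` S) \<subseteq> ideal_prod n I' J"
      unfolding ideal_prod_def
    proof (rule ideal_gen_mono, rule subsetI)
      fix x assume "x \<in> (monom ` S :: 'k mpoly set)"
      then obtain a b where ab: "x = monom (a + b)" "a \<in> L.M'" "b \<in> MJ" unfolding S_def by blast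
      have "(monom a :: 'k mpoly) \<in> I'" unfolding I'm monom_in_mideal using ab(2) L.M'_keys[OF ab(2)] mdvd_refl[of a] by blast
      moreover have "(monom b :: 'k mpoly) \<in> J" unfolding Jm monom_in_mideal using ab(3) MJ(1) mdvd_refl[of b] by blast
      moreover have "x = monom a * monom b" using ab(1) monom_add by metis
      ultimately show "x \<in> {f * g |f g. f \<in> I' \<and> g \<in> J}" by blast
    qed
  qed
  have Gprod: "mingens n (ideal_prod n I' J) = (\<lambda>(a, b). a + b) ` (L.M' \<times> minset MJ)"
    unfolding prod_eq mingens_char[OF Skeys] using L.prod_min unfolding minset_def S_def by simp
  have card1: "card (G n (ideal_prod n I' J)) = card (G n I') * card (G n J)"
    unfolding G_def Gprod GI' GJ card_image[OF monom_inj_on] using L.card_prod by simp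
  define gs where "gs = (map monom es :: 'k mpoly list)"
  have gs_len: "length gs = L2.t" unfolding gs_def by simp
  have K: "image_phi n L2.t (L2.t * L2.t) L2.Amat = kernel_psi n gs"
    unfolding gs_def using L2.N_sub_kernel L2.kernel_sub_N by blast
  have MO: "matrix_over n L2.t (L2.t * L2.t) (L2.Amat :: nat \<Rightarrow> nat \<Rightarrow> 'k mpoly)"
    unfolding matrix_over_def using L2.Amat_polyR by blast
  define P where "P s' = (\<exists>A'. matrix_over n L2.t s' A' \<and> image_phi n L2.t s' A' = kernel_psi n gs)" for s'
  have P0: "P (L2.t * L2.t)" unfolding P_def using K MO by blast
  define s0 where "s0 = (LEAST s. P s)"
  have "P s0" unfolding s0_def by (rule LeastI[of P, OF P0])
  then obtain A0 where A0: "matrix_over n L2.t s0 A0" "image_phi n L2.t s0 A0 = kernel_psi n gs"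
    unfolding P_def by blast
  have minp: "minimal_presentation n I' gs s0 A0"
    unfolding minimal_presentation_def
  proof (intro conjI allI impI)
    show "distinct gs" unfolding gs_def using es(1) by (simp add: distinct_map monom_inj_on)
    show "set gs = G n I'" unfolding gs_def G_def GI' using es(2) by simp
    show "matrix_over n (length gs) s0 A0" using A0(1) gs_len by simp
    show "image_phi n (length gs) s0 A0 = kernel_psi n gs" using A0(2) gs_len by simp
    fix s' A' assume "matrix_over n (length gs) s' A' \<and> image_phi n (length gs) s' A' = kernel_psi n gs"
    then have "P s'" unfolding P_def gs_len by blast
    then show "s0 \<le> s'" unfolding s0_def by (rule Least_le)
  qed
  have entries: "\<forall>i<length gs. \<forall>j<s0. A0 i j \<in> J"
  proof (intro allI impI)
    fix i j assume i: "i < length gs" and j: "j < s0"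
    define r where "r c = (if c = j then 1 else (0::'k mpoly))" for c
    define v where "v = (\<lambda>i. if i < L2.t then \<Sum>c<s0. A0 i c * r c else 0)"
    have "v \<in> image_phi n L2.t s0 A0" unfolding image_phi_def v_def
      by (intro CollectI exI[of _ r] conjI) (auto simp: r_def one_polyR)
    then have "v \<in> kernel_psi n (map monom es)" using A0(2) unfolding gs_def by simp
    then have "v i \<in> mideal n MJ" using L2.kernel_in_J i gs_len by simp
    moreover have "v i = A0 i j"
    proof -
      have "(\<Sum>c<s0. A0 i c * r c) = (\<Sum>c<s0. if c = j then A0 i c else 0)"
        by (rule sum.cong) (auto simp: r_def)
      then show ?thesis unfolding v_def using i j gs_len by simp
    qed
    ultimately show "A0 i j \<in> J" using Jm by simp
  qed
  show ?thesis unfolding conjoined_def I'_def[symmetric] using card1 minp entries by blast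
qed

end
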